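(* Let $q\ge3$ be an integer, $c\in\mathbb{R}$ and $\lambda\in(-1/q-c,-c)$ such that $f_c$ satisfies the pre-$q$-Sturmian condition for $\lambda$. Let $\theta=\lambda+1/q+c$. Then $\frac{3}{8q}<\theta<\frac{5}{8q}$.
   Context: $\mathbb{T}=\mathbb{R}/\mathbb{Z}$, $T(x)=qx\bmod1$. $f_c(x)=\log\left|\frac{\sin\pi q(x+c)}{\sin\pi(x+c)}\right|$. $C_\lambda=[\lambda,\lambda+1/q]\bmod1$. The function $f_c$ satisfies the pre-$q$-Sturmian condition for $\lambda$ if $f_c$ is Lipschitz on $C_\lambda$ and there exist a Lipschitz $\psi:\mathbb{T}\to\mathbb{R}$ and $\beta\in\mathbb{R}$ with $f_c(x)+\psi(x)-\psi(Tx)=\beta$ for all $x\in C_\lambda$. *)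

theory Defs
  imports Complex_Main
begin

text \<open>The circle T = R/Z is represented by 1-periodic data on the reals.
  Distance on the circle: distance to the nearest integer of the difference.\<close>
definition tdist :: "real \<Rightarrow> real \<Rightarrow> real" where
  "tdist x y = \<bar>(x - y) - of_int (round (x - y))\<bar>"

definition Tmap :: "nat \<Rightarrow> real \<Rightarrow> real" where
  "Tmap q x = frac (real q * x)"

text \<open>f_c(x) = log |sin(pi q (x+c)) / sin(pi (x+c))|, extended by continuity
  (value log q) at the removable singularities x + c in Z.\<close>
definition fc :: "nat \<Rightarrow> real \<Rightarrow> real \<Rightarrow> real" where
  "fc q c x = (if x + c \<in> \<int> then ln (real q)
     else ln \<bar>sin (pi * real q * (x + c)) / sin (pi * (x + c))\<bar>)"

text \<open>The arc C_lambda = [lambda, lambda + 1/q] mod 1, as a 1-periodic set of reals.\<close>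
definition Carc :: "nat \<Rightarrow> real \<Rightarrow> real set" where
  "Carc q lam = {x. \<exists>k::int. lam \<le> x - of_int k \<and> x - of_int k \<le> lam + 1 / real q}"

definition tlipschitz_on :: "real set \<Rightarrow> (real \<Rightarrow> real) \<Rightarrow> bool" where
  "tlipschitz_on S g \<longleftrightarrow> (\<exists>L. \<forall>x\<in>S. \<forall>y\<in>S. \<bar>g x - g y\<bar> \<le> L * tdist x y)"

definition pre_sturmian :: "nat \<Rightarrow> real \<Rightarrow> real \<Rightarrow> bool" where
  "pre_sturmian q c lam \<longleftrightarrow>
     tlipschitz_on (Carc q lam) (fc q c) \<and>
     (\<exists>(\<psi>::real \<Rightarrow> real) (\<beta>::real). tlipschitz_on UNIV \<psi> \<and>
        (\<forall>x\<in>Carc q lam. fc q c x + \<psi> x - \<psi> (Tmap q x) = \<beta>))"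

end

theory Submission
  imports Defs "HOL-Analysis.Complex_Transcendental"
begin


definition mj :: "nat \<Rightarrow> nat \<Rightarrow> real" where "mj q j = real q - 1 - 2 * real j"
definition Sq :: "nat \<Rightarrow> real \<Rightarrow> real" where "Sq q x = (\<Sum>j<q. cos (mj q j * x))"
definition Sd :: "nat \<Rightarrow> real \<Rightarrow> real" where "Sd q x = (\<Sum>j<q. - (mj q j * sin (mj q j * x)))"
definition Sdd :: "nat \<Rightarrow> real \<Rightarrow> real" where "Sdd q x = (\<Sum>j<q. - (mj q j ^ 2 * cos (mj q j * x)))"

lemma Sq_deriv: "(Sq q has_field_derivative Sd q x) (at x)"
  unfolding Sq_def Sd_def
  by (rule DERIV_sum) (auto intro!: derivative_eq_intros)

lemma Sd_deriv: "(Sd q has_field_derivative Sdd q x) (at x)"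
  unfolding Sdd_def Sd_def
  by (rule DERIV_sum) (auto intro!: derivative_eq_intros simp: power2_eq_square)

lemma Sq_sin: "Sq q x * sin x = sin (real q * x)"
proof -
  define g where "g j = sin ((real q - 2 * real j) * x)" for j
  have t: "cos (mj q j * x) * sin x = (g j - g (Suc j)) / 2" for j
  proof -
    have "cos (mj q j * x) * sin x = (sin (mj q j * x + x) - sin (mj q j * x - x)) / 2"
      by (simp add: sin_add sin_diff algebra_simps)
    also have "mj q j * x + x = (real q - 2 * real j) * x" by (simp add: mj_def algebra_simps)
    also have "mj q j * x - x = (real q - 2 * real (Suc j)) * x" by (simp add: mj_def algebra_simps)
    finally show ?thesis by (simp add: g_def)
  qed
  have "Sq q x * sin x = (\<Sum>j<q. (g j - g (Suc j)) / 2)"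
    unfolding Sq_def sum_distrib_right by (simp only: t)
  also have "\<dots> = (\<Sum>j<q. g j - g (Suc j)) / 2" by (simp add: sum_divide_distrib)
  also have "(\<Sum>j<q. g j - g (Suc j)) = g 0 - g q"
    using sum_lessThan_telescope'[of g q] by simp
  also have "g 0 - g q = 2 * sin (real q * x)"
    by (simp add: g_def algebra_simps)
  finally show ?thesis by simp
qed

lemma Sq_0: "Sq q 0 = real q" by (simp add: Sq_def)
lemma Sq_even: "Sq q (-x) = Sq q x" by (simp add: Sq_def)
lemma Sd_0: "Sd q 0 = 0" by (simp add: Sd_def)
lemma Sq_bound: "\<bar>Sq q x\<bar> \<le> real q"
proof -
  have "\<bar>Sq q x\<bar> \<le> (\<Sum>j<q. \<bar>cos (mj q j * x)\<bar>)" unfolding Sq_def by (rule sum_abs)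
  also have "\<dots> \<le> (\<Sum>j<(q::nat). 1)" by (rule sum_mono) simp
  finally show ?thesis by simp
qed

lemma Sq_sin_fun: "(\<lambda>x. Sq q x * sin x) = (\<lambda>x. sin (real q * x))"
  using Sq_sin by auto

lemma I2: "Sd q x * sin x + Sq q x * cos x = real q * cos (real q * x)"
proof -
  have "((\<lambda>x. Sq q x * sin x) has_field_derivative (Sd q x * sin x + Sq q x * cos x)) (at x)"
    by (auto intro!: derivative_eq_intros Sq_deriv)
  moreover have "((\<lambda>x. sin (real q * x)) has_field_derivative (real q * cos (real q * x))) (at x)"
    by (auto intro!: derivative_eq_intros)
  ultimately show ?thesis unfolding Sq_sin_fun using DERIV_unique by blast
qed

lemma I2_fun: "(\<lambda>x. Sd q x * sin x + Sq q x * cos x) = (\<lambda>x. real q * cos (real q * x))"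
  using I2 by auto

lemma I3: "Sdd q x * sin x + 2 * Sd q x * cos x - Sq q x * sin x = - (real q * real q) * sin (real q * x)"
proof -
  have "((\<lambda>x. Sd q x * sin x + Sq q x * cos x) has_field_derivative
        (Sdd q x * sin x + 2 * Sd q x * cos x - Sq q x * sin x)) (at x)"
    by (auto intro!: derivative_eq_intros Sq_deriv Sd_deriv simp: algebra_simps)
  moreover have "((\<lambda>x. real q * cos (real q * x)) has_field_derivative (- (real q * real q) * sin (real q * x))) (at x)"
    by (auto intro!: derivative_eq_intros simp: power2_eq_square)
  ultimately show ?thesis unfolding I2_fun using DERIV_unique by blast
qed

lemma key_ineq:
  assumes "sin x \<noteq> 0"
  shows "Sdd q x * Sq q x - (Sd q x)^2 = ((Sq q x)^2 - (real q)^2) / (sin x)^2"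
proof -
  define S s c C Q a b where "S = Sq q x" and "s = sin x" and "c = cos x" and "C = cos (real q * x)"
    and "Q = sin (real q * x)" and "a = Sd q x" and "b = Sdd q x"
  have Q: "Q = S * s" using Sq_sin unfolding Q_def S_def s_def by simp
  have sc: "s^2 + c^2 = 1" unfolding s_def c_def by simp
  have SC: "Q^2 + C^2 = 1" unfolding Q_def C_def by simp
  have e1: "a * s + S * c = real q * C" using I2[of q x] unfolding a_def s_def S_def c_def C_def by simp
  have e2: "b * s + 2 * a * c - S * s = - (real q * real q) * Q"
    using I3[of q x] unfolding a_def s_def S_def c_def b_def Q_def by simp
  have "s^2 * (b * S - a^2) = S^2 - (real q)^2"
    using Q sc SC e1 e2 by algebra
  moreover have "s \<noteq> 0" using assms s_def by simp
  ultimately have "b * S - a^2 = (S^2 - (real q)^2) / s^2" by (simp add: field_simps)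
  thus ?thesis unfolding a_def b_def S_def s_def .
qed


lemma Spos:
  assumes "q \<ge> 1" "\<bar>x\<bar> < pi / real q"
  shows "Sq q x > 0"
proof -
  have pos: "Sq q x > 0" if "0 < x" "x < pi / real q" for x
  proof -
    have q1: "real q \<ge> 1" using assms(1) by simp
    have qx: "real q * x < pi" using that q1 by (simp add: pos_less_divide_eq mult.commute)
    have "x \<le> real q * x" using q1 that by simp
    hence "x < pi" using qx by linarith
    hence s: "sin x > 0" using that sin_gt_zero by auto
    have "sin (real q * x) > 0" using qx that q1 by (intro sin_gt_zero) auto
    hence "Sq q x * sin x > 0" using Sq_sin by simp
    thus ?thesis using s by (simp add: zero_less_mult_iff)
  qed
  show ?thesis
  proof (cases "x = 0")
    case True thus ?thesis using assms by (simp add: Sq_0)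
  next
    case False
    show ?thesis
    proof (cases "x > 0")
      case True thus ?thesis using pos assms by auto
    next
      case False
      hence "Sq q (-x) > 0" using pos assms \<open>x \<noteq> 0\<close> by auto
      thus ?thesis by (simp add: Sq_even)
    qed
  qed
qed
definition ff :: "nat \<Rightarrow> real \<Rightarrow> real" where "ff q y = ln (Sq q (pi * y))"
definition fd :: "nat \<Rightarrow> real \<Rightarrow> real" where "fd q y = pi * Sd q (pi * y) / Sq q (pi * y)"

lemma Spos_y: assumes "q \<ge> 1" "\<bar>y\<bar> < 1 / real q" shows "Sq q (pi * y) > 0"
proof -
  have "\<bar>pi * y\<bar> = pi * \<bar>y\<bar>" by (simp add: abs_mult)
  also have "\<dots> < pi * (1 / real q)" using assms(2) pi_gt_zero by (intro mult_strict_left_mono) auto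
  finally have "\<bar>pi * y\<bar> < pi / real q" by simp
  thus ?thesis using Spos assms by blast
qed

lemma ff_deriv:
  assumes "q \<ge> 1" "\<bar>y\<bar> < 1 / real q"
  shows "(ff q has_real_derivative fd q y) (at y)"
proof -
  have p: "Sq q (pi * y) > 0" using Spos_y assms by blast
  have "((\<lambda>y. ln (Sq q (pi * y))) has_real_derivative (1 / Sq q (pi * y)) * (Sd q (pi * y) * pi)) (at y)"
    by (rule DERIV_chain2[where f = ln]) (auto intro!: derivative_eq_intros Sq_deriv[THEN DERIV_chain2] simp: p)
  thus ?thesis unfolding ff_def fd_def by (simp add: field_simps)
qed

definition fdd :: "nat \<Rightarrow> real \<Rightarrow> real" where
  "fdd q y = pi^2 * (Sdd q (pi*y) * Sq q (pi*y) - (Sd q (pi*y))^2) / (Sq q (pi*y))^2"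

lemma fd_deriv:
  assumes "q \<ge> 1" "\<bar>y\<bar> < 1 / real q"
  shows "(fd q has_real_derivative fdd q y) (at y)"
proof -
  have p: "Sq q (pi * y) > 0" using Spos_y assms by blast
  have d1: "((\<lambda>y. Sq q (pi * y)) has_real_derivative (Sd q (pi * y) * pi)) (at y)"
    by (rule DERIV_chain2[OF Sq_deriv]) (auto intro!: derivative_eq_intros)
  have d2: "((\<lambda>y. Sd q (pi * y)) has_real_derivative (Sdd q (pi * y) * pi)) (at y)"
    by (rule DERIV_chain2[OF Sd_deriv]) (auto intro!: derivative_eq_intros)
  have "((\<lambda>y. pi * Sd q (pi * y) / Sq q (pi * y)) has_real_derivative
      (pi * (Sdd q (pi * y) * pi) * Sq q (pi * y) - pi * Sd q (pi * y) * (Sd q (pi * y) * pi)) / (Sq q (pi * y) * Sq q (pi * y))) (at y)"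
    using p by (intro DERIV_divide DERIV_cmult d1 d2) auto
  thus ?thesis unfolding fd_def[abs_def] fdd_def by (simp add: field_simps power2_eq_square)
qed

lemma fdd_nonpos:
  assumes "q \<ge> 1" "\<bar>y\<bar> < 1 / real q"
  shows "fdd q y \<le> 0"
proof (cases "sin (pi * y) = 0")
  case False
  have b: "(Sq q (pi*y))^2 \<le> (real q)^2" using Sq_bound[of q "pi*y"]
    by (metis abs_le_square_iff abs_of_nat)
  have "Sdd q (pi*y) * Sq q (pi*y) - (Sd q (pi*y))^2 \<le> 0"
    unfolding key_ineq[OF False] using b by (intro divide_nonpos_nonneg) auto
  thus ?thesis unfolding fdd_def
    by (intro divide_nonpos_nonneg mult_nonneg_nonpos) auto
next
  case True
  then obtain i :: int where i: "pi * y = of_int i * pi" using sin_zero_iff_int2 by blast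
  hence "y = of_int i" by simp
  moreover have "\<bar>y\<bar> < 1" using assms
    by (smt (verit) divide_le_eq_1 of_nat_1 of_nat_le_iff)
  ultimately have "y = 0" by (cases "i = 0") auto
  have "Sdd q 0 \<le> 0" unfolding Sdd_def by (intro sum_nonpos) simp
  hence "pi\<^sup>2 * (Sdd q 0 * real q) / (real q)\<^sup>2 \<le> 0"
    by (intro divide_nonpos_nonneg mult_nonneg_nonpos mult_nonpos_nonneg) auto
  thus ?thesis unfolding fdd_def \<open>y = 0\<close> by (simp add: Sd_0 Sq_0)
qed

lemma F2:
  assumes "q \<ge> 1" "-1/real q < y" "y \<le> x" "x < 1/real q"
  shows "fd q x \<le> fd q y"
proof -
  have "(\<lambda>t. - fd q t) y \<le> (\<lambda>t. - fd q t) x"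
  proof (rule DERIV_nonneg_imp_nondecreasing[OF assms(3)])
    fix t assume "y \<le> t" "t \<le> x"
    hence t: "\<bar>t\<bar> < 1 / real q" using assms by auto
    show "\<exists>d. ((\<lambda>t. - fd q t) has_real_derivative d) (at t) \<and> 0 \<le> d"
      using fd_deriv[OF assms(1) t] fdd_nonpos[OF assms(1) t]
      by (intro exI[of _ "- fdd q t"]) (auto intro!: derivative_eq_intros)
  qed
  thus ?thesis by simp
qed

lemma F1:
  assumes "q \<ge> 1" "-1/real q < y" "y \<le> x" "x < 1/real q"
  shows "ff q y - ff q x \<le> (x - y) * (- fd q x)"
proof -
  have "(\<lambda>t. ff q t - t * fd q x) y \<le> (\<lambda>t. ff q t - t * fd q x) x"
  proof (rule DERIV_nonneg_imp_nondecreasing[OF assms(3)])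
    fix t assume "y \<le> t" "t \<le> x"
    hence t: "\<bar>t\<bar> < 1 / real q" using assms by auto
    have "fd q x \<le> fd q t" using F2[OF assms(1)] assms \<open>y \<le> t\<close> \<open>t \<le> x\<close> by auto
    thus "\<exists>d. ((\<lambda>t. ff q t - t * fd q x) has_real_derivative d) (at t) \<and> 0 \<le> d"
      using ff_deriv[OF assms(1) t]
      by (intro exI[of _ "fd q t - fd q x"]) (auto intro!: derivative_eq_intros)
  qed
  thus ?thesis by (simp add: algebra_simps)
qed

lemma F3:
  assumes "q \<ge> 1" "-1/real q < a" "a \<le> b" "0 \<le> d" "b + d < 1/real q"
  shows "ff q a - ff q (a + d) \<le> ff q b - ff q (b + d)"
proof (rule DERIV_nonneg_imp_nondecreasing[OF assms(3), where f = "\<lambda>t. ff q t - ff q (t + d)", simplified])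
  fix t assume "a \<le> t" "t \<le> b"
  hence t: "\<bar>t\<bar> < 1 / real q" and t2: "\<bar>t + d\<bar> < 1 / real q" using assms by auto
  have "fd q (t + d) \<le> fd q t" using F2[OF assms(1)] assms \<open>a \<le> t\<close> \<open>t \<le> b\<close> by auto
  thus "\<exists>y. ((\<lambda>t. ff q t - ff q (t + d)) has_real_derivative y) (at t) \<and> 0 \<le> y"
  proof (intro exI conjI)
    have "((\<lambda>z. ff q (z + d)) has_real_derivative fd q (t + d) * 1) (at t)"
      by (rule DERIV_chain2[where g="\<lambda>z. z + d", OF ff_deriv[OF assms(1) t2]]) (auto intro!: derivative_eq_intros)
    thus "((\<lambda>t. ff q t - ff q (t + d)) has_real_derivative fd q t - fd q (t + d)) (at t)"
      using ff_deriv[OF assms(1) t] by (auto intro!: derivative_eq_intros)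
  qed (use \<open>fd q (t + d) \<le> fd q t\<close> in simp)
qed



definition pc :: "real \<Rightarrow> real \<Rightarrow> real \<times> real \<Rightarrow> (real \<times> real) list" where
  "pc r Q ab = (let A = r + fst ab / Q; B = r + snd ab / Q in
     if B \<le> 1 then [(A,B)] else if 1 \<le> A then [(A-1,B-1)] else [(A,1),(0,B-1)])"
definition img :: "real \<Rightarrow> real \<Rightarrow> (real \<times> real) list \<Rightarrow> (real \<times> real) list" where
  "img r Q P = concat (map (pc r Q) P)"
definition mu :: "(real \<Rightarrow> real) \<Rightarrow> (real \<times> real) list \<Rightarrow> real" where
  "mu H P = sum_list (map (\<lambda>ab. H (snd ab) - H (fst ab)) P)"
definition len :: "(real \<times> real) list \<Rightarrow> real" where
  "len P = sum_list (map (\<lambda>ab. snd ab - fst ab) P)"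
definition valid :: "(real \<times> real) list \<Rightarrow> bool" where
  "valid P = (\<forall>ab \<in> set P. 0 \<le> fst ab \<and> fst ab \<le> snd ab \<and> snd ab \<le> 1)"

lemma mu_Cons[simp]: "mu H (x # P) = H (snd x) - H (fst x) + mu H P" by (simp add: mu_def)
lemma mu_Nil[simp]: "mu H [] = 0" by (simp add: mu_def)
lemma mu_append[simp]: "mu H (P @ R) = mu H P + mu H R" by (simp add: mu_def)
lemma len_Cons[simp]: "len (x # P) = snd x - fst x + len P" by (simp add: len_def)
lemma len_Nil[simp]: "len [] = 0" by (simp add: len_def)
lemma len_append[simp]: "len (P @ R) = len P + len R" by (simp add: len_def)
lemma valid_Cons[simp]: "valid (x # P) = (0 \<le> fst x \<and> fst x \<le> snd x \<and> snd x \<le> 1 \<and> valid P)" by (auto simp: valid_def)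
lemma valid_Nil[simp]: "valid []" by (simp add: valid_def)
lemma valid_append[simp]: "valid (P @ R) = (valid P \<and> valid R)" by (auto simp: valid_def)
lemma img_Cons[simp]: "img r Q (x # P) = pc r Q x @ img r Q P" by (simp add: img_def)
lemma img_Nil[simp]: "img r Q [] = []" by (simp add: img_def)

lemma valid_pc:
  assumes "0 \<le> r" "r < 1" "Q \<ge> 1" "0 \<le> a" "a \<le> b" "b \<le> 1"
  shows "valid (pc r Q (a,b))"
proof -
  have "0 \<le> a / Q" "a / Q \<le> b / Q" using assms by (auto simp: divide_right_mono)
  moreover have "b / Q \<le> 1" using assms by (simp add: divide_le_eq)
  moreover have "r + b / Q \<le> 2" "r + b / Q - 1 \<le> 1" using calculation assms by linarith+
  ultimately show ?thesis using assms unfolding pc_def Let_def by auto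
qed

lemma valid_img: assumes "0 \<le> r" "r < 1" "Q \<ge> 1" shows "valid P \<Longrightarrow> valid (img r Q P)"
proof (induction P)
  case (Cons x P)
  obtain a b where "x = (a,b)" by fastforce
  thus ?case using Cons valid_pc[of r Q a b] assms by simp
qed simp

lemma len_pc: "Q > 0 \<Longrightarrow> len (pc r Q (a,b)) = (b - a) / Q"
  unfolding pc_def Let_def by (auto simp: diff_divide_distrib)

lemma len_img: "Q > 0 \<Longrightarrow> len (img r Q P) = len P / Q"
proof (induction P)
  case (Cons x P)
  thus ?case using len_pc[of Q r "fst x" "snd x"] by (simp add: add_divide_distrib)
qed simp

lemma mu_pc:
  assumes per: "\<And>x. H (x + 1) = H x"
  shows "mu H (pc r Q (a,b)) = H (r + b / Q) - H (r + a / Q)"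
proof -
  have h0: "H 1 = H 0" using per[of 0] by simp
  have h1: "H (x - 1) = H x" for x using per[of "x - 1"] by simp
  show ?thesis unfolding pc_def Let_def using h0 h1 by auto
qed

lemma mu_img:
  assumes per: "\<And>x. H (x + 1) = H x"
  shows "mu H (img r Q P) = sum_list (map (\<lambda>ab. H (r + snd ab / Q) - H (r + fst ab / Q)) P)"
proof (induction P)
  case (Cons x P)
  thus ?case using mu_pc[where H=H, OF per, of r Q "fst x" "snd x"] by simp
qed simp

lemma mu_lip:
  assumes lip: "\<And>x y. \<bar>H x - H y\<bar> \<le> M * \<bar>x - y\<bar>" and "valid P"
  shows "- M * len P \<le> mu H P"
  using assms(2)
proof (induction P)
  case (Cons x P)
  have "\<bar>H (snd x) - H (fst x)\<bar> \<le> M * (snd x - fst x)" using lip[of "snd x" "fst x"] Cons.prems by simp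
  thus ?case using Cons by (simp add: algebra_simps)
qed simp

lemma mu_crude:
  assumes cr: "\<And>a b. 0 \<le> a \<Longrightarrow> a \<le> b \<Longrightarrow> b \<le> 1 \<Longrightarrow> G a - G b \<le> K * (b - a)" and "valid P"
  shows "- mu G P \<le> K * len P"
  using assms(2)
proof (induction P)
  case (Cons x P)
  have "G (fst x) - G (snd x) \<le> K * (snd x - fst x)" using cr Cons.prems by simp
  thus ?case using Cons by (simp add: algebra_simps)
qed simp

lemma dyn:
  fixes Psi G :: "real \<Rightarrow> real" and r Q beta M K :: real
  assumes Q: "Q > 1" and r: "0 \<le> r" "r < 1"
    and per: "\<And>x. Psi (x + 1) = Psi x"
    and lip: "\<And>x y. \<bar>Psi x - Psi y\<bar> \<le> M * \<bar>x - y\<bar>"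
    and eq: "\<And>w. 0 \<le> w \<Longrightarrow> w \<le> 1 \<Longrightarrow> Psi (r + w / Q) = Psi w - G w + beta"
    and cr: "\<And>a b. 0 \<le> a \<Longrightarrow> a \<le> b \<Longrightarrow> b \<le> 1 \<Longrightarrow> G a - G b \<le> K * (b - a)"
    and inc: "\<And>a b d. 0 \<le> a \<Longrightarrow> a \<le> b \<Longrightarrow> 0 \<le> d \<Longrightarrow> b + d \<le> 1 \<Longrightarrow> G a - G (a + d) \<le> G b - G (b + d)"
    and K: "K \<ge> 0"
  shows "G 1 - G 0 \<le> G (1 - 1/Q) - G 1 + K / (Q * (Q - 1)) + M / Q ^ n"
proof -
  define P where "P n = (img r Q ^^ n) [(0,1)]" for n
  have PS: "P (Suc n) = img r Q (P n)" for n by (simp add: P_def)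
  have vP: "valid (P n)" for n
    by (induction n) (auto simp: PS P_def[of 0] intro!: valid_img r Q[THEN less_imp_le])
  have lP: "len (P n) = 1 / Q ^ n" for n
    by (induction n) (use Q in \<open>auto simp: PS P_def[of 0] len_img\<close>)
  have step: "mu Psi (P (Suc n)) = mu Psi (P n) - mu G (P n)" for n
  proof -
    have "mu Psi (P (Suc n)) = sum_list (map (\<lambda>ab. Psi (r + snd ab / Q) - Psi (r + fst ab / Q)) (P n))"
      unfolding PS by (rule mu_img[where H=Psi, OF per])
    also have "\<dots> = sum_list (map (\<lambda>ab. (Psi (snd ab) - Psi (fst ab)) - (G (snd ab) - G (fst ab))) (P n))"
      using vP[of n] unfolding valid_def
      by (intro arg_cong[where f=sum_list] map_cong) (auto simp: eq)
    also have "\<dots> = mu Psi (P n) - mu G (P n)" unfolding mu_def by (simp add: sum_list_subtractf)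
    finally show ?thesis .
  qed
  define c where "c = K * Q / (Q - 1)"
  have mono: "mu Psi (P (Suc j)) + c / Q ^ Suc j \<le> mu Psi (P j) + c / Q ^ j" for j
  proof -
    have "- mu G (P j) \<le> K * (1 / Q ^ j)" using mu_crude[OF cr vP[of j]] lP by simp
    moreover have "c / Q ^ j - c / Q ^ Suc j = K / Q ^ j"
    proof -
      have q0: "Q \<noteq> 0" "Q - 1 \<noteq> 0" "Q ^ j \<noteq> 0" using Q by auto
      have "c / Q ^ j - c / Q ^ Suc j = (c * (Q - 1) / Q) / Q ^ j" using q0 by (simp add: field_simps)
      also have "c * (Q - 1) / Q = K" unfolding c_def using q0 by (simp add: field_simps)
      finally show ?thesis .
    qed
    ultimately show ?thesis using step[of j] by simp
  qed
  have mono2: "mu Psi (P (k + 2)) + c / Q ^ (k + 2) \<le> mu Psi (P 2) + c / Q ^ 2" for k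
  proof (induction k)
    case (Suc k) thus ?case using mono[of "k + 2"] by simp
  qed (simp add: numeral_2_eq_2)
  have P0: "P 0 = [(0,1)]" by (simp add: P_def)
  have m1: "mu Psi (P 1) = - (G 1 - G 0)"
    using step[of 0] per[of 0] by (simp add: P0)
  have g1: "- mu G (P 1) \<le> G (1 - 1/Q) - G 1"
  proof -
    have P1: "P 1 = pc r Q (0,1)" by (simp add: P_def)
    have Qi: "0 < 1 / Q" "1/Q < 1" using Q by auto
    show ?thesis
    proof (cases "r + 1 / Q \<le> 1")
      case True
      hence "P 1 = [(r, r + 1/Q)]" unfolding P1 pc_def by simp
      moreover have "G r - G (r + 1/Q) \<le> G (1 - 1/Q) - G (1 - 1/Q + 1/Q)"
        using inc[of r "1 - 1/Q" "1/Q"] r True Qi by simp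
      ultimately show ?thesis by simp
    next
      case False
      hence "P 1 = [(r, 1), (0, r + 1/Q - 1)]" unfolding P1 pc_def using r by simp
      moreover have "G 0 - G (0 + (r + 1/Q - 1)) \<le> G (1 - 1/Q) - G (1 - 1/Q + (r + 1/Q - 1))"
        using inc[of 0 "1 - 1/Q" "r + 1/Q - 1"] r False Qi by simp
      ultimately show ?thesis by simp
    qed
  qed
  have m2: "mu Psi (P 2) \<le> - (G 1 - G 0) + G (1 - 1/Q) - G 1"
    using step[of 1] m1 g1 by (simp add: numeral_2_eq_2)
  show ?thesis
  proof (cases "n \<ge> 2")
    case True
    then obtain k where k: "n = k + 2" by (metis add.commute le_Suc_ex)
    have lo: "- M * (1 / Q ^ n) \<le> mu Psi (P n)" using mu_lip[OF lip vP[of n]] lP by simp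
    have c2: "c / Q ^ 2 = K / (Q * (Q - 1))" using Q unfolding c_def by (simp add: field_simps power2_eq_square)
    have cn: "c / Q ^ n \<ge> 0" using Q K unfolding c_def by simp
    show ?thesis using mono2[of k] k lo m2 c2 cn by simp
  next
    case False
    have lo: "- M * (1 / Q ^ 2) \<le> mu Psi (P 2)" using mu_lip[OF lip vP[of 2]] lP by simp
    have c2: "c / Q ^ 2 = K / (Q * (Q - 1))" using Q unfolding c_def by (simp add: field_simps power2_eq_square)
    have M0: "M \<ge> 0" using lip[of 1 0] by simp
    have "M / Q ^ 2 \<le> M / Q ^ n" using False Q M0
      by (intro divide_left_mono) (auto intro!: power_increasing)
    moreover have "K / (Q * (Q - 1)) \<ge> 0" using Q K by simp
    ultimately show ?thesis using lo m2 by simp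
  qed
qed



lemma t2: "(\<Sum>m<5. sin_coeff m * (x::real) ^ m) = x - x^3/6"
  by (simp add: lessThan_nat_numeral sin_coeff_def fact_numeral)

lemma sin_bounds:
  fixes x :: real
  shows "x - x^3/6 - \<bar>x\<bar>^5/120 \<le> sin x" "sin x \<le> x - x^3/6 + \<bar>x\<bar>^5/120"
proof -
  have f0: "fact 5 = (120::real)" by (simp add: fact_numeral)
  have f: "inverse (fact 5) * \<bar>x\<bar> ^ 5 = \<bar>x\<bar>^5 / 120"
    unfolding f0 by (simp only: divide_inverse mult.commute)
  have "\<bar>sin x - (x - x^3/6)\<bar> \<le> \<bar>x\<bar>^5 / 120"
    using Maclaurin_sin_bound[of x 5] by (simp only: t2 f)
  thus "x - x^3/6 - \<bar>x\<bar>^5/120 \<le> sin x" "sin x \<le> x - x^3/6 + \<bar>x\<bar>^5/120" by linarith+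
qed

lemma sqrt2_bounds: "1.4142 \<le> sqrt (2::real)" "sqrt (2::real) \<le> 1.4143"
proof -
  show "1.4142 \<le> sqrt (2::real)" by (rule real_le_rsqrt) (simp add: power2_eq_square)
  have "sqrt (2::real) \<le> sqrt (1.4143^2)" by (rule real_sqrt_le_mono) (simp add: power2_eq_square)
  thus "sqrt (2::real) \<le> 1.4143" by simp
qed

lemma cot38: "cos (3*pi/8) / sin (3*pi/8) \<ge> 0.414"
proof -
  define a where "a = pi / 8"
  have c: "cos (3*pi/8) = sin a" unfolding a_def using cos_sin_eq[of "3*pi/8"] by simp
  have s: "sin (3*pi/8) = cos a" unfolding a_def using sin_cos_eq[of "3*pi/8"] by simp
  have a0: "0 < a" "a < pi/2" unfolding a_def using pi_gt_zero by auto
  have ca: "cos a > 0" using a0 cos_gt_zero by auto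
  have e2: "2 * a = pi / 4" unfolding a_def by simp
  have h1: "sqrt 2 / 2 = 2 * sin a * cos a" using sin_double[of a] sin_45 e2 by simp
  have h2: "sqrt 2 / 2 = 2 * (cos a)^2 - 1" using cos_double_cos[of a] cos_45 e2 by simp
  have "sin a / cos a = (2 * sin a * cos a) / (2 * (cos a)^2)" using ca by (simp add: power2_eq_square)
  also have "\<dots> = (sqrt 2 / 2) / (1 + sqrt 2 / 2)"
  proof -
    have h2': "2 * (cos a)^2 = 1 + sqrt 2 / 2" using h2 by linarith
    show ?thesis by (simp only: h1[symmetric] h2')
  qed
  finally have e: "sin a / cos a = sqrt 2 / (2 + sqrt 2)" by (simp add: field_simps)
  have "0.414 \<le> sqrt 2 / (2 + sqrt 2)" using sqrt2_bounds by (simp add: field_simps)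
  thus ?thesis using e c s by simp
qed


lemma sq_le: "0 \<le> a \<Longrightarrow> a \<le> b \<Longrightarrow> b * b \<le> c \<Longrightarrow> a^2 \<le> (c::real)"
  by (smt (verit, best) mult_mono power2_eq_square)

lemma ln16: "0.4554 \<le> ln (1.6::real)"
proof -
  define t :: real where "t = 0.4554 / 16"
  have "exp t \<le> 1 + t + t^2" using exp_bound[of t] unfolding t_def by simp
  also have "\<dots> \<le> 1.0293" unfolding t_def by (simp add: power2_eq_square)
  finally have u1: "exp t \<le> 1.0293" .
  have u2: "exp t ^ 2 \<le> 1.0595" by (rule sq_le[OF _ u1]) auto
  have u4: "(exp t ^ 2) ^ 2 \<le> 1.1226" by (rule sq_le[OF _ u2]) auto
  have u8: "((exp t ^ 2) ^ 2) ^ 2 \<le> 1.2603" by (rule sq_le[OF _ u4]) auto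
  have "(((exp t ^ 2) ^ 2) ^ 2) ^ 2 \<le> 1.6" by (rule sq_le[OF _ u8]) auto
  hence "exp t ^ 16 \<le> 1.6" by (simp add: power_mult[symmetric])
  hence "exp (16 * t) \<le> 1.6" using exp_of_nat_mult[of 16 t] by simp
  hence "16 * t \<le> ln 1.6" by (subst ln_ge_iff) auto
  thus ?thesis unfolding t_def by simp
qed



lemma xcos_le_sin: assumes "0 \<le> x" "x \<le> pi/2" shows "x * cos x \<le> sin x"
proof -
  have "(\<lambda>t. sin t - t * cos t) 0 \<le> (\<lambda>t. sin t - t * cos t) x"
  proof (rule DERIV_nonneg_imp_nondecreasing[OF assms(1)])
    fix t assume t: "0 \<le> t" "t \<le> x"
    have "sin t \<ge> 0" using t assms by (intro sin_ge_zero) auto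
    thus "\<exists>y. ((\<lambda>t. sin t - t * cos t) has_real_derivative y) (at t) \<and> 0 \<le> y"
      using t by (intro exI[of _ "t * sin t"]) (auto intro!: derivative_eq_intros)
  qed
  thus ?thesis by simp
qed

lemma id53: "(y::real) > 0 \<Longrightarrow> (5*y - (5*y)^3/6 - \<bar>5*y\<bar>^5/120) - 1.6 * (3*y - (3*y)^3/6 + \<bar>3*y\<bar>^5/120)
      = y * (1/5 - 409/30 * y^2 - 17569/600 * y^4)"
  by (simp add: abs_mult power_mult_distrib) (simp add: field_simps eval_nat_numeral)

lemma sin53:
  assumes "0 < y" "y \<le> pi / 32"
  shows "1.6 * sin (3*y) \<le> sin (5*y)"
proof -
  have pi: "pi \<le> 3.1416" using pi_approx by simp
  have y1: "y \<le> 0.0982" using assms pi by simp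
  have "y^2 \<le> 0.0982^2" using y1 assms by (intro power_mono) auto
  hence z: "y^2 \<le> 0.00965" by (simp add: power2_eq_square)
  have "y^4 = y^2 * y^2" by (simp add: eval_nat_numeral)
  also have "\<dots> \<le> 0.00965 * y^2" using z by (intro mult_right_mono) auto
  finally have z2: "y^4 \<le> 0.00965 * y^2" .
  define A P B R where "A = sin (5*y)" and "P = 5*y - (5*y)^3/6 - \<bar>5*y\<bar>^5/120"
    and "B = sin (3*y)" and "R = 3*y - (3*y)^3/6 + \<bar>3*y\<bar>^5/120"
  have a: "P \<le> A" unfolding A_def P_def by (rule sin_bounds)
  have b: "B \<le> R" unfolding B_def R_def by (rule sin_bounds)
  have id: "P - 1.6 * R = y * (1/5 - 409/30 * y^2 - 17569/600 * y^4)"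
    unfolding P_def R_def using id53 assms by blast
  have "1/5 - 409/30 * y^2 - 17569/600 * y^4 \<ge> 0" using z z2 by simp
  hence "y * (1/5 - 409/30 * y^2 - 17569/600 * y^4) \<ge> 0" using assms by simp
  hence "1.6 * R \<le> P" using id by simp
  moreover have "1.6 * B \<le> 1.6 * R" using b by simp
  ultimately show ?thesis using a unfolding A_def B_def by linarith
qed


lemma vals:
  assumes q: "q \<ge> 3"
  defines "x \<equiv> 3 * pi / (8 * real q)"
  shows "ff q (3 / (8 * real q)) - ff q (3 / (8 * real q) - 1 / real q) = ln (sin (5 * (pi / (8 * real q))) / sin (3 * (pi / (8 * real q))))"
    and "fd q (3 / (8 * real q)) = pi * (real q * (cos (3*pi/8) / sin (3*pi/8)) - cos x / sin x)"
    and "0 < x" "x \<le> pi / 8"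
proof -
  have Q: "real q \<ge> 3" using q by simp
  define y where "y = pi / (8 * real q)"
  have y0: "0 < y" unfolding y_def using Q by simp
  have y1: "y \<le> pi / 24" unfolding y_def using Q by (simp add: field_simps)
  have xy: "x = 3 * y" unfolding x_def y_def by simp
  show "0 < x" "x \<le> pi / 8" using y0 y1 xy by auto
  have qy: "real q * y = pi / 8" unfolding y_def using Q by simp
  have s3: "sin (3 * y) > 0" using y0 y1 by (intro sin_gt_zero) auto
  have s5: "sin (5 * y) > 0" using y0 y1 by (intro sin_gt_zero) auto
  have S38: "sin (3*pi/8) > 0" by (rule sin_gt_zero) auto
  have e1: "pi * (3 / (8 * real q)) = 3 * y" unfolding y_def by simp
  have e2: "pi * (3 / (8 * real q) - 1 / real q) = - (5 * y)" unfolding y_def using Q by (simp add: field_simps)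
  have v1: "Sq q (3 * y) = sin (3*pi/8) / sin (3 * y)"
  proof -
    have "Sq q (3*y) * sin (3*y) = sin (real q * (3 * y))" by (rule Sq_sin)
    also have "real q * (3 * y) = 3*pi/8" using qy by (simp add: algebra_simps)
    finally show ?thesis using s3 by (simp add: field_simps)
  qed
  have v2: "Sq q (- (5 * y)) = sin (3*pi/8) / sin (5 * y)"
  proof -
    have "Sq q (5*y) * sin (5*y) = sin (real q * (5 * y))" by (rule Sq_sin)
    also have "real q * (5 * y) = pi - 3*pi/8" using qy by (simp add: algebra_simps)
    also have "sin (pi - 3*pi/8) = sin (3*pi/8)" by (rule sin_pi_minus)
    finally show ?thesis using s5 by (simp add: field_simps Sq_even)
  qed
  show "ff q (3 / (8 * real q)) - ff q (3 / (8 * real q) - 1 / real q) = ln (sin (5 * (pi / (8 * real q))) / sin (3 * (pi / (8 * real q))))"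
    unfolding ff_def e1 e2 v1 v2 y_def[symmetric] using s3 s5 S38
    by (simp add: ln_div)
  have d: "Sd q (3*y) * sin (3*y) + Sq q (3*y) * cos (3*y) = real q * cos (real q * (3*y))" by (rule I2)
  have eq3: "real q * (3 * y) = 3*pi/8" using qy by (simp add: algebra_simps)
  have d': "Sd q (3*y) * sin (3*y) + Sq q (3*y) * cos (3*y) = real q * cos (3*pi/8)" using d by (simp only: eq3)
  hence d2: "Sd q (3*y) = (real q * cos (3*pi/8) - Sq q (3*y) * cos (3*y)) / sin (3*y)"
    using s3 by (simp add: field_simps)
  show "fd q (3 / (8 * real q)) = pi * (real q * (cos (3*pi/8) / sin (3*pi/8)) - cos x / sin x)"
  proof -
    define S s c C s8 where "S = Sq q (3*y)" and "s = sin (3*y)" and "c = cos (3*y)"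
      and "C = cos (3*pi/8)" and "s8 = sin (3*pi/8)"
    have Ss: "S * s = s8" unfolding S_def s_def s8_def using Sq_sin[of q "3*y"] eq3 by simp
    have s0: "s > 0" "s8 > 0" "S > 0" using s3 S38 Ss unfolding s_def s8_def
      by (auto simp: zero_less_mult_iff) (metis Ss s_def s8_def S38 s3 zero_less_mult_pos2)
    have "fd q (3 / (8 * real q)) = pi * ((real q * C - S * c) / s) / S"
      unfolding fd_def e1 d2 S_def s_def c_def C_def ..
    also have "\<dots> = pi * (real q * C / (S * s) - c / s)" using s0 by (simp add: field_simps)
    also have "\<dots> = pi * (real q * (C / s8) - c / s)" unfolding Ss by simp
    finally show ?thesis unfolding C_def s8_def c_def s_def xy .
  qed
qed


lemma num4:
  assumes q: "q \<ge> 4"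
  defines "th \<equiv> 3 / (8 * real q)"
  shows "ff q (th - 1 / (real q)^2) - ff q th + (- fd q th) / ((real q)^2 * (real q - 1))
         < ff q th - ff q (th - 1 / real q)"
proof -
  have Q: "real q \<ge> 4" using q by simp
  have q1: "q \<ge> 1" "q \<ge> 3" using q by auto
  define x where "x = 3 * pi / (8 * real q)"
  note V = vals[OF q1(2), folded th_def, folded x_def]
  have th0: "0 < th" "th < 1 / real q" unfolding th_def using Q by (auto simp: field_simps)
  have "1 / (real q)^2 \<le> 1 / real q" using Q by (intro divide_left_mono) (auto simp: power2_eq_square)
  hence a1: "-1 / real q < th - 1 / (real q)^2" using th0 by simp
  have T1: "ff q (th - 1 / (real q)^2) - ff q th \<le> (1 / (real q)^2) * (- fd q th)"
    using F1[OF q1(1) a1 _ th0(2)] by simp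
  define fdn where "fdn = - fd q th"
  have sum: "(1 / (real q)^2) * fdn + fdn / ((real q)^2 * (real q - 1)) = fdn / (real q * (real q - 1))"
    using Q by (simp add: field_simps power2_eq_square)
  have sx: "sin x > 0" using V(3,4) by (intro sin_gt_zero) auto
  have cx: "cos x / sin x \<le> 1 / x" using xcos_le_sin[of x] V(3,4) sx by (simp add: field_simps)
  have px: "pi * (1 / x) = 8 * real q / 3" unfolding x_def by simp
  have k: "cos (3*pi/8) / sin (3*pi/8) \<ge> 0.414" by (rule cot38)
  have pi: "3.141592653588 \<le> pi" using pi_approx by simp
  have "fdn = pi * (cos x / sin x) - pi * real q * (cos (3*pi/8) / sin (3*pi/8))"
    unfolding fdn_def V(2) by (simp add: algebra_simps)
  also have "\<dots> \<le> pi * (1 / x) - pi * real q * 0.414"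
    using cx k Q pi_gt_zero by (intro diff_mono mult_left_mono) auto
  also have "\<dots> = real q * (8/3 - 0.414 * pi)" unfolding px by (simp add: algebra_simps)
  finally have f1: "fdn \<le> real q * (8/3 - 0.414 * pi)" .
  have c0: "0 \<le> 8/3 - 0.414 * pi" using pi_less_4 by simp
  have "fdn / (real q * (real q - 1)) \<le> real q * (8/3 - 0.414 * pi) / (real q * (real q - 1))"
    using f1 Q by (intro divide_right_mono) auto
  also have "\<dots> = (8/3 - 0.414 * pi) / (real q - 1)" using Q by simp
  also have "\<dots> \<le> (8/3 - 0.414 * pi) / 3" using Q c0 by (intro divide_left_mono) auto
  also have "\<dots> < 0.4554" using pi by simp
  also have "\<dots> \<le> ln 1.6" by (rule ln16)
  also have "ln 1.6 \<le> ln (sin (5 * (pi / (8 * real q))) / sin (3 * (pi / (8 * real q))))"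
  proof -
    have yb: "0 < pi / (8 * real q)" "pi / (8 * real q) \<le> pi / 32" using Q by (auto simp: field_simps)
    have s3: "sin (3 * (pi / (8 * real q))) > 0" using yb pi_gt_zero by (intro sin_gt_zero) (auto simp: field_simps)
    have "1.6 \<le> sin (5 * (pi / (8 * real q))) / sin (3 * (pi / (8 * real q)))"
      using sin53[OF yb] s3 by (simp add: field_simps)
    moreover have "(0::real) < 1.6" by simp
    ultimately show ?thesis by (subst ln_le_cancel_iff) linarith+
  qed
  also have "\<dots> = ff q th - ff q (th - 1 / real q)" using V(1) by simp
  finally have "fdn / (real q * (real q - 1)) < ff q th - ff q (th - 1 / real q)" .
  thus ?thesis using T1 sum unfolding fdn_def by linarith
qed


lemma Sq3: "Sq 3 x = 1 + 2 * cos (2 * x)"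
  by (simp add: Sq_def mj_def lessThan_nat_numeral)

lemma Sd3: "Sd 3 x = - 4 * sin (2 * x)"
  by (simp add: Sd_def mj_def lessThan_nat_numeral)

lemma num3:
  defines "th \<equiv> 3 / (8 * real (3::nat))"
  shows "ff 3 (th - 1 / (real (3::nat))^2) - ff 3 th + (- fd 3 th) / ((real (3::nat))^2 * (real (3::nat) - 1))
         < ff 3 th - ff 3 (th - 1 / real (3::nat))"
proof -
  have th: "th = 1/8" unfolding th_def by simp
  define a1 B C where "a1 = 1 + 2 * cos (pi / 36)" and "B = 1 + sqrt 2" and "C = 1 + 2 * cos (5 * pi / 12)"
  have e1: "ff 3 (th - 1 / (real (3::nat))^2) = ln a1"
    unfolding ff_def Sq3 a1_def th by (simp add: algebra_simps)
  have e2: "ff 3 th = ln B" unfolding ff_def Sq3 B_def th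
  proof -
    have "2 * (pi * (1/8)) = pi / 4" by simp
    thus "ln (1 + 2 * cos (2 * (pi * (1 / 8)))) = ln (1 + sqrt 2)" by (simp add: cos_45)
  qed
  have e3: "ff 3 (th - 1 / real (3::nat)) = ln C" unfolding ff_def Sq3 C_def th
  proof -
    have "2 * (pi * (1/8 - 1 / real (3::nat))) = - (5 * pi / 12)" by (simp add: field_simps)
    thus "ln (1 + 2 * cos (2 * (pi * (1 / 8 - 1 / real (3::nat))))) = ln (1 + 2 * cos (5 * pi / 12))" by simp
  qed
  have e4: "- fd 3 th = 2 * sqrt 2 * pi / B" unfolding fd_def Sq3 Sd3 B_def th
  proof -
    have "2 * (pi * (1/8)) = pi / 4" by simp
    thus "- (pi * (- 4 * sin (2 * (pi * (1 / 8)))) / (1 + 2 * cos (2 * (pi * (1 / 8))))) = 2 * sqrt 2 * pi / (1 + sqrt 2)"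
      by (simp add: cos_45 sin_45)
  qed
  have s2: "1.4142 \<le> sqrt (2::real)" "sqrt (2::real) \<le> 1.4143" by (rule sqrt2_bounds)+
  have pi: "3.141592653588 \<le> pi" "pi \<le> 3.1415926535899" using pi_approx by auto
  have B0: "B > 0" unfolding B_def using real_sqrt_ge_zero[of 2] by linarith
  define t where "t = 2 * sqrt 2 * pi / (B * 18)"
  have t0: "0 \<le> t" unfolding t_def using B0 pi_gt_zero by simp
  have "sqrt 2 / B \<le> 0.5859" unfolding B_def using s2 by (simp add: field_simps)
  moreover have "0 \<le> sqrt 2 / B" using B0 by simp
  ultimately have "pi * (sqrt 2 / B) \<le> 3.1416 * 0.5859" using pi by (intro mult_mono) auto
  moreover have "t = pi * (sqrt 2 / B) / 9" unfolding t_def by (simp add: field_simps)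
  ultimately have "t \<le> 3.1416 * 0.5859 / 9" by (metis divide_right_mono zero_le_numeral)
  hence t1: "t \<le> 0.2046" by simp
  have "exp t \<le> 1 + t + t^2" using exp_bound[of t] t0 t1 by simp
  also have "\<dots> \<le> 1 + 0.2046 + 0.2046^2" using t0 t1 by (intro add_mono power_mono) auto
  finally have et: "exp t \<le> 1.2465" by (simp add: power2_eq_square)
  have a1b: "a1 \<le> 3" "a1 > 0" unfolding a1_def
    using cos_gt_zero[of "pi/36"] pi_gt_zero by auto
  have c5: "cos (5 * pi / 12) = sin (pi / 12)" using cos_sin_eq[of "5 * pi / 12"] by simp
  have C0: "C > 0" unfolding C_def c5 using sin_gt_zero[of "pi/12"] pi_gt_zero by simp
  have Cb: "C \<le> 1 + pi / 6" unfolding C_def c5 using sin_x_le_x[of "pi/12"] pi_gt_zero by simp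
  have "a1 * C * exp t \<le> 3 * (1 + pi/6) * 1.2465"
    using a1b Cb C0 et by (intro mult_mono) auto
  also have "\<dots> < 3 + 2 * sqrt 2" using pi s2 by simp
  also have "3 + 2 * sqrt 2 = B^2" unfolding B_def by (simp add: power2_eq_square algebra_simps)
  finally have m: "a1 * C * exp t < B^2" .
  have "ln a1 + ln C + t = ln (a1 * C * exp t)" using a1b C0 by (simp add: ln_mult)
  also have "\<dots> < ln (B^2)" using m a1b C0 B0 by (subst ln_less_cancel_iff) auto
  also have "ln (B^2) = 2 * ln B" using B0 by (simp add: ln_realpow)
  finally have "ln a1 + ln C + t < 2 * ln B" .
  moreover have "(- fd 3 th) / ((real (3::nat))^2 * (real (3::nat) - 1)) = t"
    unfolding e4 t_def by (simp add: field_simps)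
  ultimately show ?thesis unfolding e1 e2 e3 by linarith
qed



lemma fc_ff:
  assumes "q \<ge> 1" "\<bar>x + c\<bar> < 1 / real q"
  shows "fc q c x = ff q (x + c)"
proof (cases "x + c \<in> \<int>")
  case True
  then obtain k :: int where k: "x + c = of_int k" by (auto elim: Ints_cases)
  have "1 / real q \<le> 1" using assms(1) by simp
  hence "\<bar>of_int k :: real\<bar> < 1" using assms(2) k by linarith
  hence "k = 0" by linarith
  hence "x + c = 0" using k by simp
  thus ?thesis using True unfolding fc_def ff_def by (simp add: Sq_0)
next
  case False
  define y where "y = x + c"
  have sn: "sin (pi * y) \<noteq> 0"
  proof
    assume "sin (pi * y) = 0"
    then obtain i :: int where "pi * y = of_int i * pi" using sin_zero_iff_int2 by blast
    hence "y = of_int i" by simp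
    thus False using False y_def by simp
  qed
  have "Sq q (pi * y) * sin (pi * y) = sin (real q * (pi * y))" by (rule Sq_sin)
  hence "sin (pi * real q * y) / sin (pi * y) = Sq q (pi * y)" using sn by (simp add: field_simps)
  moreover have "Sq q (pi * y) > 0" using Spos_y assms y_def by blast
  ultimately show ?thesis using False unfolding fc_def ff_def y_def by simp
qed

lemma fc_even: "fc q (-c) (-x) = fc q c x"
proof -
  have "(-x + -c \<in> \<int>) = (x + c \<in> \<int>)"
    by (metis minus_add_distrib minus_in_Ints_iff)
  moreover have "sin (pi * real q * (- x + - c)) / sin (pi * (- x + - c)) = sin (pi * real q * (x + c)) / sin (pi * (x + c))"
  proof -
    have "pi * real q * (- x + - c) = - (pi * real q * (x + c))" "pi * (- x + - c) = - (pi * (x + c))" by (simp_all add: algebra_simps)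
    thus ?thesis by simp
  qed
  ultimately show ?thesis unfolding fc_def by simp
qed

lemma per_int:
  fixes psi :: "real \<Rightarrow> real"
  assumes per: "\<And>x. psi (x + 1) = psi x"
  shows "psi (x + of_int k) = psi x"
proof -
  have n: "psi (x + real n) = psi x" for x n
  proof (induction n)
    case (Suc n)
    have "psi (x + real (Suc n)) = psi ((x + real n) + 1)" by (simp add: algebra_simps)
    thus ?case using per Suc by simp
  qed simp
  show ?thesis
  proof (cases "k \<ge> 0")
    case True thus ?thesis using n[of x "nat k"] by simp
  next
    case False
    have "psi (x + of_int k + real (nat (-k))) = psi (x + of_int k)" by (rule n)
    thus ?thesis using False by simp
  qed
qed


lemma core:
  fixes q :: nat and c lam beta M :: real and psi :: "real \<Rightarrow> real"
  assumes q3: "q \<ge> 3"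
    and per: "\<And>x. psi (x + 1) = psi x"
    and lip: "\<And>x y. \<bar>psi x - psi y\<bar> \<le> M * \<bar>x - y\<bar>"
    and eq: "\<And>t. 0 \<le> t \<Longrightarrow> t \<le> 1 / real q \<Longrightarrow> fc q c (lam + t) + psi (lam + t) - psi (real q * (lam + t)) = beta"
    and th0: "0 < lam + 1 / real q + c"
    and th1: "lam + 1 / real q + c \<le> 3 / (8 * real q)"
  shows False
proof -
  define Q where "Q = real q"
  have Q3: "Q \<ge> 3" unfolding Q_def using q3 by simp
  have q1: "q \<ge> 1" using q3 by simp
  define th where "th = lam + 1 / Q + c"
  define ths where "ths = 3 / (8 * Q)"
  have th0': "0 < th" "th \<le> ths" using th0 th1 unfolding th_def ths_def Q_def by auto
  have ths1: "ths < 1 / Q" "0 < ths" unfolding ths_def using Q3 by (auto simp: field_simps)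
  have iQ: "0 < 1 / Q" "1 / Q < 1" using Q3 by auto
  define r where "r = frac ((1 - Q) * lam)"
  define Psi where "Psi w = psi (Q * lam + w)" for w
  define G where "G w = fc q c (lam + w / Q)" for w
  define K where "K = - fd q ths / Q"
  have r: "0 \<le> r" "r < 1" unfolding r_def by (auto simp: frac_lt_1)
  have perP: "Psi (x + 1) = Psi x" for x unfolding Psi_def using per[of "Q * lam + x"] by (simp add: add.assoc)
  have lipP: "\<bar>Psi x - Psi y\<bar> \<le> M * \<bar>x - y\<bar>" for x y unfolding Psi_def using lip[of "Q * lam + x" "Q * lam + y"] by simp
  have eqP: "Psi (r + w / Q) = Psi w - G w + beta" if "0 \<le> w" "w \<le> 1" for w
  proof -
    have t: "0 \<le> w / Q" "w / Q \<le> 1 / real q" using that Q3 unfolding Q_def by (auto simp: divide_right_mono)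
    have e: "Q * lam + (r + w / Q) = (lam + w / Q) + of_int (- floor ((1 - Q) * lam))"
      unfolding r_def frac_def by (simp add: algebra_simps)
    have "Psi (r + w / Q) = psi ((lam + w / Q) + of_int (- floor ((1 - Q) * lam)))" unfolding Psi_def e ..
    also have "\<dots> = psi (lam + w / Q)" by (rule per_int[of psi, OF per])
    finally have "Psi (r + w / Q) = psi (lam + w / Q)" .
    also have "\<dots> = psi (real q * (lam + w / Q)) - fc q c (lam + w / Q) + beta" using eq[OF t] by simp
    also have "real q * (lam + w / Q) = Q * lam + w" unfolding Q_def using Q3 Q_def by (simp add: field_simps)
    finally show ?thesis unfolding Psi_def G_def by simp
  qed
  have Gff: "G w = ff q (th - 1 / Q + w / Q)" if "0 \<le> w" "w \<le> 1" for w
  proof -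
    have "w / Q \<le> 1 / Q" using that Q3 by (simp add: divide_right_mono)
    moreover have "0 \<le> w / Q" using that Q3 by simp
    ultimately have "\<bar>lam + w / Q + c\<bar> < 1 / real q" using th0' ths1 unfolding th_def Q_def by (simp add: abs_less_iff)
    hence "G w = ff q (lam + w / Q + c)" unfolding G_def using fc_ff[OF q1] by blast
    thus ?thesis unfolding th_def by (simp add: algebra_simps)
  qed
  have dom: "-1 / real q < th - 1 / Q + w / Q" "th - 1 / Q + w / Q \<le> th" if "0 \<le> w" "w \<le> 1" for w
  proof -
    have "0 \<le> w / Q" "w / Q \<le> 1 / Q" using that Q3 by (auto simp: divide_right_mono)
    thus "-1 / real q < th - 1 / Q + w / Q" "th - 1 / Q + w / Q \<le> th" using th0' unfolding Q_def by auto
  qed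
  have cr: "G a - G b \<le> K * (b - a)" if "0 \<le> a" "a \<le> b" "b \<le> 1" for a b
  proof -
    have ab: "th - 1 / Q + a / Q \<le> th - 1 / Q + b / Q" using that Q3 by (simp add: divide_right_mono)
    have bl: "th - 1 / Q + b / Q < 1 / real q" using dom[of b] that th0' ths1 unfolding Q_def by auto
    have ga: "G a = ff q (th - 1 / Q + a / Q)" "G b = ff q (th - 1 / Q + b / Q)" using Gff that by auto
    have ya: "-1 / real q < th - 1 / Q + a / Q" using dom[of a] that by auto
    have "G a - G b \<le> ((th - 1 / Q + b / Q) - (th - 1 / Q + a / Q)) * (- fd q (th - 1 / Q + b / Q))"
      unfolding ga by (rule F1[OF q1 ya ab bl])
    also have "\<dots> \<le> ((th - 1 / Q + b / Q) - (th - 1 / Q + a / Q)) * (- fd q ths)"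
    proof (intro mult_left_mono)
      show "- fd q (th - 1 / Q + b / Q) \<le> - fd q ths"
        using F2[OF q1, of "th - 1 / Q + b / Q" ths] dom[of b] that th0' ths1 unfolding Q_def by auto
    qed (use ab in auto)
    also have "\<dots> = K * (b - a)" unfolding K_def using Q3 by (simp add: field_simps)
    finally show ?thesis .
  qed
  have inc: "G a - G (a + d) \<le> G b - G (b + d)" if "0 \<le> a" "a \<le> b" "0 \<le> d" "b + d \<le> 1" for a b d
  proof -
    have ya: "-1 / real q < th - 1 / Q + a / Q" using dom[of a] that by auto
    have ab: "th - 1 / Q + a / Q \<le> th - 1 / Q + b / Q" using that Q3 by (simp add: divide_right_mono)
    have d0: "0 \<le> d / Q" using that Q3 by simp
    have bd: "th - 1 / Q + b / Q + d / Q < 1 / real q"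
      using dom(2)[of "b + d"] that th0' ths1 unfolding Q_def by (simp add: add_divide_distrib add.assoc)
    have "ff q (th - 1 / Q + a / Q) - ff q (th - 1 / Q + a / Q + d / Q) \<le> ff q (th - 1 / Q + b / Q) - ff q (th - 1 / Q + b / Q + d / Q)"
      by (rule F3[OF q1 ya ab d0 bd])
    moreover have "G (a + d) = ff q (th - 1 / Q + a / Q + d / Q)" "G (b + d) = ff q (th - 1 / Q + b / Q + d / Q)"
      using Gff[of "a + d"] Gff[of "b + d"] that by (simp_all add: add_divide_distrib add.assoc)
    ultimately show ?thesis using Gff[of a] Gff[of b] that by simp
  qed
  have K0: "K \<ge> 0"
  proof -
    have "fd q ths \<le> fd q 0" using F2[OF q1, of 0 ths] ths1 q1 unfolding Q_def by auto
    also have "fd q 0 = 0" unfolding fd_def by (simp add: Sd_0)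
    finally show ?thesis unfolding K_def using Q3 by (simp add: divide_nonpos_pos)
  qed
  have Q1: "Q > 1" using Q3 by simp
  have main: "G 1 - G 0 \<le> G (1 - 1/Q) - G 1 + K / (Q * (Q - 1)) + M / Q ^ n" for n
    by (rule dyn[OF Q1 r perP lipP eqP cr inc K0])
  have G1: "G 1 = ff q th" using Gff[of 1] by simp
  have G0: "G 0 = ff q (th - 1 / real q)" using Gff[of 0] unfolding Q_def by simp
  have G2: "G (1 - 1/Q) = ff q (th - 1 / (real q)^2)"
  proof -
    have "0 \<le> 1 - 1/Q" "1 - 1/Q \<le> 1" using iQ by auto
    hence "G (1 - 1/Q) = ff q (th - 1 / Q + (1 - 1/Q) / Q)" using Gff by blast
    also have "th - 1 / Q + (1 - 1/Q) / Q = th - 1 / (real q)^2" unfolding Q_def using Q3 Q_def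
      by (simp add: field_simps power2_eq_square)
    finally show ?thesis .
  qed
  have Dm: "ff q ths - ff q (ths - 1 / real q) \<le> ff q th - ff q (th - 1 / real q)"
  proof -
    have "ff q (th - 1 / real q) - ff q (th - 1 / real q + 1 / real q) \<le> ff q (ths - 1 / real q) - ff q (ths - 1 / real q + 1 / real q)"
      using th0' ths1 unfolding Q_def by (intro F3[OF q1]) auto
    thus ?thesis by simp
  qed
  have Tm: "ff q (th - 1 / (real q)^2) - ff q th \<le> ff q (ths - 1 / (real q)^2) - ff q ths"
  proof -
    have "1 / (real q)^2 \<le> 1 / real q" using Q3 unfolding Q_def by (intro divide_left_mono) (auto simp: power2_eq_square)
    hence a: "-1 / real q < th - 1 / (real q)^2" using th0' by simp
    have "ff q (th - 1 / (real q)^2) - ff q (th - 1 / (real q)^2 + 1 / (real q)^2) \<le> ff q (ths - 1 / (real q)^2) - ff q (ths - 1 / (real q)^2 + 1 / (real q)^2)"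
      using th0' ths1 a unfolding Q_def by (intro F3[OF q1]) auto
    thus ?thesis by simp
  qed
  have Keq: "K / (Q * (Q - 1)) = (- fd q ths) / ((real q)^2 * (real q - 1))"
    unfolding K_def Q_def using Q3 Q_def by (simp add: field_simps power2_eq_square)
  have num: "ff q (ths - 1 / (real q)^2) - ff q ths + (- fd q ths) / ((real q)^2 * (real q - 1))
         < ff q ths - ff q (ths - 1 / real q)"
  proof (cases "q = 3")
    case True thus ?thesis using num3 unfolding ths_def Q_def by simp
  next
    case False hence "q \<ge> 4" using q3 by simp
    thus ?thesis using num4 unfolding ths_def Q_def by simp
  qed
  define gap where "gap = ff q ths - ff q (ths - 1 / real q) - (ff q (ths - 1 / (real q)^2) - ff q ths + (- fd q ths) / ((real q)^2 * (real q - 1)))"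
  have gap0: "gap > 0" using num unfolding gap_def by simp
  have M0: "M \<ge> 0" using lip[of 1 0] by simp
  obtain n where n: "(1 / Q) ^ n < gap / (M + 1)"
    using real_arch_pow_inv[of "gap / (M + 1)" "1 / Q"] gap0 M0 iQ by auto
  have "M / Q ^ n \<le> (M + 1) * (1 / Q) ^ n" using M0 Q3 by (simp add: power_divide field_simps)
  also have "\<dots> < (M + 1) * (gap / (M + 1))" using n M0 by (intro mult_strict_left_mono) auto
  also have "\<dots> = gap" using M0 by simp
  finally have "M / Q ^ n < gap" .
  thus False using main[of n] G1 G0 G2 Dm Tm Keq unfolding gap_def by linarith
qed



theorem lemma5p7:
  fixes q :: nat and c lam :: real
  assumes "q \<ge> 3"
    and "- 1 / real q - c < lam" and "lam < - c"
    and "pre_sturmian q c lam"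
  shows "3 / (8 * real q) < lam + 1 / real q + c \<and> lam + 1 / real q + c < 5 / (8 * real q)"
proof -
  obtain psi beta L where lipt: "\<And>x y. \<bar>psi x - psi y\<bar> \<le> L * tdist x y"
    and eqC: "\<And>x. x \<in> Carc q lam \<Longrightarrow> fc q c x + psi x - psi (Tmap q x) = beta"
    using assms(4) unfolding pre_sturmian_def tlipschitz_on_def by blast
  have td0: "0 \<le> tdist x y" for x y unfolding tdist_def by simp
  have td: "tdist x y \<le> \<bar>x - y\<bar>" for x y
    unfolding tdist_def using round_diff_minimal[of "x - y" 0] by simp
  have per: "psi (x + 1) = psi x" for x
  proof -
    have "tdist (x + 1) x = 0" unfolding tdist_def by simp
    thus ?thesis using lipt[of "x + 1" x] by simp
  qed
  have lip: "\<bar>psi x - psi y\<bar> \<le> \<bar>L\<bar> * \<bar>x - y\<bar>" for x y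
  proof -
    have "\<bar>psi x - psi y\<bar> \<le> L * tdist x y" by (rule lipt)
    also have "\<dots> \<le> \<bar>L\<bar> * tdist x y" using td0[of x y] by (intro mult_right_mono) auto
    also have "\<dots> \<le> \<bar>L\<bar> * \<bar>x - y\<bar>" using td[of x y] by (intro mult_left_mono) auto
    finally show ?thesis .
  qed
  have Tm: "psi (Tmap q x) = psi (real q * x)" for x
  proof -
    have "Tmap q x = real q * x + of_int (- floor (real q * x))" unfolding Tmap_def frac_def by simp
    hence "psi (Tmap q x) = psi (real q * x + of_int (- floor (real q * x)))" by simp
    also have "\<dots> = psi (real q * x)" by (rule per_int[of psi, OF per])
    finally show ?thesis .
  qed
  have eq: "fc q c (lam + t) + psi (lam + t) - psi (real q * (lam + t)) = beta"
    if "0 \<le> t" "t \<le> 1 / real q" for t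
  proof -
    have "lam + t \<in> Carc q lam" unfolding Carc_def using that by (intro CollectI exI[of _ 0]) simp
    thus ?thesis using eqC Tm by metis
  qed
  have Q: "real q \<ge> 3" using assms(1) by simp
  have th0: "0 < lam + 1 / real q + c" using assms(2) by (simp add: field_simps) 
  have th1: "lam + 1 / real q + c < 1 / real q" using assms(3) by simp
  have A: "3 / (8 * real q) < lam + 1 / real q + c"
  proof (rule ccontr)
    assume "\<not> ?thesis"
    hence "lam + 1 / real q + c \<le> 3 / (8 * real q)" by simp
    thus False using core[OF assms(1) per lip eq th0] by blast
  qed
  have B: "lam + 1 / real q + c < 5 / (8 * real q)"
  proof (rule ccontr)
    assume "\<not> ?thesis"
    hence ge: "5 / (8 * real q) \<le> lam + 1 / real q + c" by simp
    define psi' where "psi' x = psi (- x)" for x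
    define lam' where "lam' = - lam - 1 / real q"
    have per': "psi' (x + 1) = psi' x" for x unfolding psi'_def using per[of "- x - 1"] by simp
    have lip': "\<bar>psi' x - psi' y\<bar> \<le> \<bar>L\<bar> * \<bar>x - y\<bar>" for x y unfolding psi'_def using lip[of "-x" "-y"] by (simp add: abs_minus_commute)
    have eq': "fc q (- c) (lam' + t) + psi' (lam' + t) - psi' (real q * (lam' + t)) = beta"
      if "0 \<le> t" "t \<le> 1 / real q" for t
    proof -
      define t' where "t' = 1 / real q - t"
      have t': "0 \<le> t'" "t' \<le> 1 / real q" using that unfolding t'_def by auto
      have e: "lam' + t = - (lam + t')" unfolding lam'_def t'_def by simp
      have "fc q (- c) (lam' + t) = fc q c (lam + t')" unfolding e by (rule fc_even)
      moreover have "psi' (lam' + t) = psi (lam + t')" unfolding psi'_def e by (simp add: add.commute)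
      moreover have "psi' (real q * (lam' + t)) = psi (real q * (lam + t'))" unfolding psi'_def e by (simp add: algebra_simps)
      ultimately show ?thesis using eq[OF t'] by simp
    qed
    have th0': "0 < lam' + 1 / real q + - c" unfolding lam'_def using assms(3) by simp
    have th1': "lam' + 1 / real q + - c \<le> 3 / (8 * real q)"
    proof -
      have "lam' + 1 / real q + - c = 1 / real q - (lam + 1 / real q + c)" unfolding lam'_def by simp
      also have "\<dots> \<le> 1 / real q - 5 / (8 * real q)" using ge by simp
      also have "\<dots> = 3 / (8 * real q)" using Q by (simp add: field_simps)
      finally show ?thesis .
    qed
    show False using core[OF assms(1) per' lip' eq' th0' th1'] .
  qed
  show ?thesis using A B by simp
qed


end
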